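(* Let $R$ be a commutative ring with identity and $I$ an ideal of $R$. Then the amalgamated duplication $R\bowtie I$ is a properly zipped ring if and only if $R$ is properly zipped.
   Context: $R\bowtie I:=\{(r,r+i)\mid r\in R,\ i\in I\}$, a subring of $R\times R$. A commutative ring $A$ is properly zipped if whenever a prime ideal $\mathfrak{p}$ of $A$ contains the intersection of a family $\{\mathfrak{p}_i\}_i$ of prime ideals of $A$, then $\mathfrak{p}_i\subseteq\mathfrak{p}$ for some $i$. *)

theory Defs
  imports "HOL-Algebra.Algebra"
begin

definition amalg_dup :: "('a, 'b) ring_scheme \<Rightarrow> 'a set \<Rightarrow> ('a \<times> 'a) ring" where
  "amalg_dup R I = (RDirProd R R)
     \<lparr>carrier := {(r, r \<oplus>\<^bsub>R\<^esub> i) | r i. r \<in> carrier R \<and> i \<in> I}\<rparr>"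

definition properly_zipped :: "('a, 'b) ring_scheme \<Rightarrow> bool" where
  "properly_zipped A \<longleftrightarrow>
     (\<forall>p F. primeideal p A \<and> (\<forall>q\<in>F. primeideal q A) \<and> \<Inter>F \<subseteq> p \<longrightarrow> (\<exists>q\<in>F. q \<subseteq> p))"

end

theory Submission
  imports Defs
begin
lemma AD_ops:
  "carrier (amalg_dup R I) = {(r, r \<oplus>\<^bsub>R\<^esub> i) | r i. r \<in> carrier R \<and> i \<in> I}"
  "x \<otimes>\<^bsub>amalg_dup R I\<^esub> y = (fst x \<otimes>\<^bsub>R\<^esub> fst y, snd x \<otimes>\<^bsub>R\<^esub> snd y)"
  "x \<oplus>\<^bsub>amalg_dup R I\<^esub> y = (fst x \<oplus>\<^bsub>R\<^esub> fst y, snd x \<oplus>\<^bsub>R\<^esub> snd y)"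
  "\<one>\<^bsub>amalg_dup R I\<^esub> = (\<one>\<^bsub>R\<^esub>, \<one>\<^bsub>R\<^esub>)"
  "\<zero>\<^bsub>amalg_dup R I\<^esub> = (\<zero>\<^bsub>R\<^esub>, \<zero>\<^bsub>R\<^esub>)"
  by (auto simp: amalg_dup_def RDirProd_def DirProd_def monoid.defs split: prod.splits)

lemma RDP_ops:
  "x \<otimes>\<^bsub>RDirProd R R\<^esub> y = (fst x \<otimes>\<^bsub>R\<^esub> fst y, snd x \<otimes>\<^bsub>R\<^esub> snd y)"
  "x \<oplus>\<^bsub>RDirProd R R\<^esub> y = (fst x \<oplus>\<^bsub>R\<^esub> fst y, snd x \<oplus>\<^bsub>R\<^esub> snd y)"
  "\<one>\<^bsub>RDirProd R R\<^esub> = (\<one>\<^bsub>R\<^esub>, \<one>\<^bsub>R\<^esub>)"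
  "\<zero>\<^bsub>RDirProd R R\<^esub> = (\<zero>\<^bsub>R\<^esub>, \<zero>\<^bsub>R\<^esub>)"
  by (auto simp: RDirProd_def DirProd_def monoid.defs split: prod.splits)

context
  fixes R (structure) and I
  assumes R: "cring R" and I: "ideal I R"
begin

interpretation cring R by (rule R)
interpretation I: ideal I R by (rule I)

lemma AD_carrier_iff:
  "(a, b) \<in> carrier (amalg_dup R I) \<longleftrightarrow> a \<in> carrier R \<and> b \<in> carrier R \<and> b \<ominus> a \<in> I"
proof
  assume "(a, b) \<in> carrier (amalg_dup R I)"
  then obtain i where "a \<in> carrier R" "i \<in> I" "b = a \<oplus> i" by (auto simp: AD_ops)
  then show "a \<in> carrier R \<and> b \<in> carrier R \<and> b \<ominus> a \<in> I"
  proof -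
    have "i \<in> carrier R" using `i \<in> I` I.a_subset by blast
    then have "b \<ominus> a = i" using `a \<in> carrier R` `b = a \<oplus> i`
      by (simp add: a_minus_def a_comm[of a i] a_assoc r_neg)
    then show ?thesis using `a \<in> carrier R` `i \<in> carrier R` `b = a \<oplus> i` `i \<in> I` by simp
  qed
next
  assume h: "a \<in> carrier R \<and> b \<in> carrier R \<and> b \<ominus> a \<in> I"
  then have "b = a \<oplus> (b \<ominus> a)"
    by (simp add: a_minus_def a_comm[of a] a_assoc l_neg)
  then show "(a, b) \<in> carrier (amalg_dup R I)" using h by (auto simp: AD_ops)
qed

lemma AD_carrier_sub: "x \<in> carrier (amalg_dup R I) \<Longrightarrow> fst x \<in> carrier R \<and> snd x \<in> carrier R"
  by (cases x) (simp add: AD_carrier_iff)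

lemma RDP_cring: "cring (RDirProd R R)"
proof -
  interpret P: ring "RDirProd R R" by (rule RDirProd_ring) (rule ring_axioms)+
  show ?thesis
  proof (rule cringI[OF P.abelian_group_axioms])
    show "comm_monoid (RDirProd R R)"
    proof (rule comm_monoidI)
      show "\<And>x y. x \<in> carrier (RDirProd R R) \<Longrightarrow> y \<in> carrier (RDirProd R R) \<Longrightarrow> x \<otimes>\<^bsub>RDirProd R R\<^esub> y = y \<otimes>\<^bsub>RDirProd R R\<^esub> x"
        by (auto simp: RDP_ops RDirProd_carrier m_comm)
    qed (auto intro: P.m_assoc P.m_closed)
  qed (rule P.l_distr)
qed

lemma RDP_minus:
  assumes "x \<in> carrier (RDirProd R R)"
  shows "\<ominus>\<^bsub>RDirProd R R\<^esub> x = (\<ominus> fst x, \<ominus> snd x)"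
proof -
  interpret P: cring "RDirProd R R" by (rule RDP_cring)
  show ?thesis
    using assms by (intro P.minus_equality) (auto simp: RDP_ops RDirProd_carrier l_neg)
qed

lemma AD_cring: "cring (amalg_dup R I)"
proof -
  interpret P: cring "RDirProd R R" by (rule RDP_cring)
  let ?H = "carrier (amalg_dup R I)"
  have Hsub: "?H \<subseteq> carrier (RDirProd R R)"
    using AD_carrier_sub by (auto simp: RDirProd_carrier)
  have "subring ?H (RDirProd R R)"
  proof (rule P.subringI[OF Hsub])
    show "\<one>\<^bsub>RDirProd R R\<^esub> \<in> ?H" by (simp add: RDP_ops AD_carrier_iff a_minus_def r_neg I.zero_closed)
  next
    fix h assume h: "h \<in> ?H"
    obtain a b where ab: "h = (a, b)" by (cases h)
    have c: "a \<in> carrier R" "b \<in> carrier R" "b \<ominus> a \<in> I" using h ab AD_carrier_iff by auto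
    have "\<ominus> b \<ominus> \<ominus> a = \<ominus> (b \<ominus> a)" using c(1,2) by algebra
    then show "\<ominus>\<^bsub>RDirProd R R\<^esub> h \<in> ?H"
    proof -
      have "(a, b) \<in> carrier (RDirProd R R)" using c by (simp add: RDirProd_carrier)
      then show ?thesis using c I.a_inv_closed `\<ominus> b \<ominus> \<ominus> a = \<ominus> (b \<ominus> a)`
        by (simp add: ab RDP_minus AD_carrier_iff)
    qed
  next
    fix h1 h2 assume h: "h1 \<in> ?H" "h2 \<in> ?H"
    obtain a b where ab: "h1 = (a, b)" by (cases h1)
    obtain c d where cd: "h2 = (c, d)" by (cases h2)
    have c1: "a \<in> carrier R" "b \<in> carrier R" "b \<ominus> a \<in> I" using h ab AD_carrier_iff by auto
    have c2: "c \<in> carrier R" "d \<in> carrier R" "d \<ominus> c \<in> I" using h cd AD_carrier_iff by auto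
    have e1: "b \<otimes> d \<ominus> a \<otimes> c = b \<otimes> (d \<ominus> c) \<oplus> (b \<ominus> a) \<otimes> c"
      using c1 c2 by algebra
    have "b \<otimes> (d \<ominus> c) \<oplus> (b \<ominus> a) \<otimes> c \<in> I"
      using c1 c2 by (intro I.a_closed I.I_l_closed I.I_r_closed) auto
    then show "h1 \<otimes>\<^bsub>RDirProd R R\<^esub> h2 \<in> ?H"
      using c1 c2 e1 by (simp add: ab cd RDP_ops AD_carrier_iff)
    have e2: "(b \<oplus> d) \<ominus> (a \<oplus> c) = (b \<ominus> a) \<oplus> (d \<ominus> c)"
      using c1 c2 by algebra
    then show "h1 \<oplus>\<^bsub>RDirProd R R\<^esub> h2 \<in> ?H"
      using c1 c2 e2 I.a_closed by (simp add: ab cd RDP_ops AD_carrier_iff)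
  qed
  then have "subcring ?H (RDirProd R R)" by (rule P.subcringI')
  then have "cring ((RDirProd R R)\<lparr>carrier := ?H\<rparr>)" using P.subcring_iff[OF Hsub] by simp
  moreover have "(RDirProd R R)\<lparr>carrier := ?H\<rparr> = amalg_dup R I"
    by (simp add: amalg_dup_def)
  ultimately show ?thesis by simp
qed


lemma proj_hom:
  assumes f: "f = fst \<or> f = snd"
  shows "ring_hom_ring (amalg_dup R I) R f"
proof -
  interpret A: cring "amalg_dup R I" by (rule AD_cring)
  show ?thesis
    apply (rule ring_hom_ringI[OF A.ring_axioms ring_axioms])
    using f AD_carrier_sub by (auto simp: AD_ops)
qed

lemma diag_hom: "ring_hom_ring R (amalg_dup R I) (\<lambda>s. (s, s))"
proof -
  interpret A: cring "amalg_dup R I" by (rule AD_cring)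
  show ?thesis
    apply (rule ring_hom_ringI[OF ring_axioms A.ring_axioms])
    by (auto simp: AD_ops(2-5) AD_carrier_iff a_minus_def r_neg I.zero_closed)
qed

lemma prime_one: "primeideal P R \<Longrightarrow> \<one> \<notin> P"
  using ideal.one_imp_carrier primeideal.axioms(1) primeideal.I_notcarr by metis

lemma pre_prime:
  assumes f: "f = fst \<or> f = snd" and P: "primeideal P R"
  shows "primeideal {x \<in> carrier (amalg_dup R I). f x \<in> P} (amalg_dup R I)"
proof -
  interpret A: cring "amalg_dup R I" by (rule AD_cring)
  interpret h: ring_hom_ring "amalg_dup R I" R f by (rule proj_hom[OF f])
  interpret P: primeideal P R by (rule P)
  show ?thesis
  proof (rule primeidealI)
    show "ideal {x \<in> carrier (amalg_dup R I). f x \<in> P} (amalg_dup R I)"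
      by (rule h.ideal_vimage) (rule P.is_ideal)
    show "cring (amalg_dup R I)" by (rule A.is_cring)
    have "f \<one>\<^bsub>amalg_dup R I\<^esub> = \<one>" using f by (auto simp: AD_ops)
    then have "\<one>\<^bsub>amalg_dup R I\<^esub> \<notin> {x \<in> carrier (amalg_dup R I). f x \<in> P}"
      using prime_one[OF P] by auto
    then show "carrier (amalg_dup R I) \<noteq> {x \<in> carrier (amalg_dup R I). f x \<in> P}"
      using A.one_closed by blast
    fix a b assume ab: "a \<in> carrier (amalg_dup R I)" "b \<in> carrier (amalg_dup R I)"
      "a \<otimes>\<^bsub>amalg_dup R I\<^esub> b \<in> {x \<in> carrier (amalg_dup R I). f x \<in> P}"
    then have "f a \<otimes> f b \<in> P" using h.hom_mult by auto
    then show "a \<in> {x \<in> carrier (amalg_dup R I). f x \<in> P} \<or> b \<in> {x \<in> carrier (amalg_dup R I). f x \<in> P}"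
      using ab P.I_prime h.hom_closed by auto
  qed
qed


lemma classify:
  assumes Q: "primeideal Q (amalg_dup R I)"
  defines "D \<equiv> {s \<in> carrier R. (s, s) \<in> Q}"
  shows "primeideal D R"
    and "Q = {x \<in> carrier (amalg_dup R I). fst x \<in> D} \<or> Q = {x \<in> carrier (amalg_dup R I). snd x \<in> D}"
proof -
  interpret A: cring "amalg_dup R I" by (rule AD_cring)
  interpret Q: primeideal Q "amalg_dup R I" by (rule Q)
  show "primeideal D R"
  proof (rule primeidealI)
    show "ideal D R" unfolding D_def by (rule ring_hom_ring.ideal_vimage[OF diag_hom]) (rule Q.is_ideal)
    show "cring R" by (rule R)
    show "carrier R \<noteq> D"
    proof
      assume "carrier R = D"
      then have "\<one> \<in> D" using one_closed by blast
      then have "(\<one>, \<one>) \<in> Q" unfolding D_def by blast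
      then have "\<one>\<^bsub>amalg_dup R I\<^esub> \<in> Q" by (simp only: AD_ops(4))
      then show False using Q.one_imp_carrier Q.I_notcarr by simp
    qed
    fix a b assume ab: "a \<in> carrier R" "b \<in> carrier R" "a \<otimes> b \<in> D"
    have eq: "(a, a) \<otimes>\<^bsub>amalg_dup R I\<^esub> (b, b) = (a \<otimes> b, a \<otimes> b)"
      by (simp only: AD_ops(2) fst_conv snd_conv)
    have "(a \<otimes> b, a \<otimes> b) \<in> Q" using ab(3) unfolding D_def by blast
    then have "(a, a) \<otimes>\<^bsub>amalg_dup R I\<^esub> (b, b) \<in> Q" by (simp only: eq)
    moreover have "(a, a) \<in> carrier (amalg_dup R I)" "(b, b) \<in> carrier (amalg_dup R I)"
      using ab by (simp_all add: AD_carrier_iff a_minus_def r_neg I.zero_closed)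
    ultimately show "a \<in> D \<or> b \<in> D" using Q.I_prime ab unfolding D_def by blast
  qed
  have Qsub: "Q \<subseteq> carrier (amalg_dup R I)" by (rule Q.a_subset)
  have Iin: "i \<in> carrier R" if "i \<in> I" for i using that I.a_subset by blast
  have c1: "(j, \<zero>) \<in> carrier (amalg_dup R I)" if "j \<in> I" for j
    using that Iin[OF that] I.a_inv_closed by (simp add: AD_carrier_iff a_minus_def)
  have c2: "(\<zero>, j) \<in> carrier (amalg_dup R I)" if "j \<in> I" for j
    using that Iin[OF that] by (simp add: AD_carrier_iff a_minus_def)
  have split: "(\<forall>j\<in>I. (j, \<zero>) \<in> Q) \<or> (\<forall>j\<in>I. (\<zero>, j) \<in> Q)"
  proof (rule ccontr)
    assume "\<not> ?thesis"
    then obtain j1 j2 where j: "j1 \<in> I" "j2 \<in> I" "(j1, \<zero>) \<notin> Q" "(\<zero>, j2) \<notin> Q" by blast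
    have "(j1, \<zero>) \<otimes>\<^bsub>amalg_dup R I\<^esub> (\<zero>, j2) = \<zero>\<^bsub>amalg_dup R I\<^esub>"
      using Iin j by (simp add: AD_ops)
    then have "(j1, \<zero>) \<otimes>\<^bsub>amalg_dup R I\<^esub> (\<zero>, j2) \<in> Q" using Q.zero_closed by simp
    then show False using Q.I_prime c1 c2 j by blast
  qed
  have mi: "a \<ominus> b \<in> I" if "b \<ominus> a \<in> I" "a \<in> carrier R" "b \<in> carrier R" for a b
  proof -
    have "a \<ominus> b = \<ominus> (b \<ominus> a)" using that by algebra
    then show ?thesis using I.a_inv_closed that by simp
  qed
  show "Q = {x \<in> carrier (amalg_dup R I). fst x \<in> D} \<or> Q = {x \<in> carrier (amalg_dup R I). snd x \<in> D}"
    using split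
  proof
    assume J: "\<forall>j\<in>I. (j, \<zero>) \<in> Q"
    have "Q = {x \<in> carrier (amalg_dup R I). snd x \<in> D}"
    proof (intro equalityI subsetI)
      fix x assume x: "x \<in> Q"
      obtain a b where ab: "x = (a, b)" by (cases x)
      have cc: "a \<in> carrier R" "b \<in> carrier R" "b \<ominus> a \<in> I" using x Qsub ab AD_carrier_iff by auto
      have "a \<oplus> (b \<ominus> a) = b" "b \<oplus> \<zero> = b" using cc by algebra+
      then have "(b, b) = (a, b) \<oplus>\<^bsub>amalg_dup R I\<^esub> (b \<ominus> a, \<zero>)" by (simp add: AD_ops)
      then have "(b, b) \<in> Q" using Q.a_closed x ab J cc by metis
      then show "x \<in> {x \<in> carrier (amalg_dup R I). snd x \<in> D}" using x Qsub ab cc unfolding D_def by auto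
    next
      fix x assume x: "x \<in> {x \<in> carrier (amalg_dup R I). snd x \<in> D}"
      obtain a b where ab: "x = (a, b)" by (cases x)
      have cc: "a \<in> carrier R" "b \<in> carrier R" "b \<ominus> a \<in> I" using x ab AD_carrier_iff by auto
      have "b \<oplus> (a \<ominus> b) = a" "b \<oplus> \<zero> = b" using cc by algebra+
      then have "(a, b) = (b, b) \<oplus>\<^bsub>amalg_dup R I\<^esub> (a \<ominus> b, \<zero>)" by (simp add: AD_ops)
      moreover have "(b, b) \<in> Q" using x ab unfolding D_def by auto
      ultimately show "x \<in> Q" using Q.a_closed ab J mi cc by metis
    qed
    then show ?thesis by blast
  next
    assume J: "\<forall>j\<in>I. (\<zero>, j) \<in> Q"
    have "Q = {x \<in> carrier (amalg_dup R I). fst x \<in> D}"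
    proof (intro equalityI subsetI)
      fix x assume x: "x \<in> Q"
      obtain a b where ab: "x = (a, b)" by (cases x)
      have cc: "a \<in> carrier R" "b \<in> carrier R" "b \<ominus> a \<in> I" using x Qsub ab AD_carrier_iff by auto
      have "b \<oplus> (a \<ominus> b) = a" "a \<oplus> \<zero> = a" using cc by algebra+
      then have "(a, a) = (a, b) \<oplus>\<^bsub>amalg_dup R I\<^esub> (\<zero>, a \<ominus> b)" by (simp add: AD_ops)
      then have "(a, a) \<in> Q" using Q.a_closed x ab J cc mi by metis
      then show "x \<in> {x \<in> carrier (amalg_dup R I). fst x \<in> D}" using x Qsub ab cc unfolding D_def by auto
    next
      fix x assume x: "x \<in> {x \<in> carrier (amalg_dup R I). fst x \<in> D}"
      obtain a b where ab: "x = (a, b)" by (cases x)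
      have cc: "a \<in> carrier R" "b \<in> carrier R" "b \<ominus> a \<in> I" using x ab AD_carrier_iff by auto
      have "a \<oplus> (b \<ominus> a) = b" "a \<oplus> \<zero> = a" using cc by algebra+
      then have "(a, b) = (a, a) \<oplus>\<^bsub>amalg_dup R I\<^esub> (\<zero>, b \<ominus> a)" by (simp add: AD_ops)
      moreover have "(a, a) \<in> Q" using x ab unfolding D_def by auto
      ultimately show "x \<in> Q" using Q.a_closed ab J cc by metis
    qed
    then show ?thesis by blast
  qed
qed


lemma Iin: "i \<in> I \<Longrightarrow> i \<in> carrier R" using I.a_subset by blast

lemma c1: "j \<in> I \<Longrightarrow> (j, \<zero>) \<in> carrier (amalg_dup R I)"
  using Iin I.a_inv_closed by (simp add: AD_carrier_iff a_minus_def)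

lemma c2: "j \<in> I \<Longrightarrow> (\<zero>, j) \<in> carrier (amalg_dup R I)"
  using Iin by (simp add: AD_carrier_iff a_minus_def)

lemma mi: "b \<ominus> a \<in> I \<Longrightarrow> a \<in> carrier R \<Longrightarrow> b \<in> carrier R \<Longrightarrow> a \<ominus> b \<in> I"
proof -
  assume that: "b \<ominus> a \<in> I" "a \<in> carrier R" "b \<in> carrier R"
  have "a \<ominus> b = \<ominus> (b \<ominus> a)" using that by algebra
  then show ?thesis using I.a_inv_closed that by simp
qed

lemma both_in:
  assumes J: "ideal J R" and IJ: "I \<subseteq> J" and x: "(a, b) \<in> carrier (amalg_dup R I)"
  shows "a \<in> J \<longleftrightarrow> b \<in> J"
proof -
  interpret J: ideal J R by (rule J)
  have cc: "a \<in> carrier R" "b \<in> carrier R" "b \<ominus> a \<in> I" using x AD_carrier_iff by auto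
  have e: "b = a \<oplus> (b \<ominus> a)" "a = b \<oplus> (a \<ominus> b)" using cc by algebra+
  show ?thesis using e cc mi[OF cc(3,1,2)] IJ J.a_closed by (metis subsetD)
qed

lemma pz_down:
  assumes A: "properly_zipped (amalg_dup R I)"
  shows "properly_zipped R"
  unfolding properly_zipped_def
proof (intro allI impI)
  fix p F assume h: "primeideal p R \<and> (\<forall>q\<in>F. primeideal q R) \<and> \<Inter>F \<subseteq> p"
  let ?pre = "\<lambda>q. {x \<in> carrier (amalg_dup R I). fst x \<in> q}"
  have psub: "p \<subseteq> carrier R" using h primeideal.axioms(1) ideal.axioms(1) additive_subgroup.a_subset by metis
  have Fne: "F \<noteq> {}"
  proof
    assume "F = {}"
    then have "p = carrier R" using h psub by auto
    then show False using h primeideal.I_notcarr by metis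
  qed
  have P1: "primeideal (?pre p) (amalg_dup R I)" using pre_prime h by blast
  have P2: "\<forall>q'\<in>?pre ` F. primeideal q' (amalg_dup R I)" using pre_prime h by blast
  have P3: "\<Inter>(?pre ` F) \<subseteq> ?pre p"
  proof
    fix x assume x: "x \<in> \<Inter>(?pre ` F)"
    then have "x \<in> carrier (amalg_dup R I)" using Fne by auto
    moreover have "fst x \<in> \<Inter>F" using x by auto
    ultimately show "x \<in> ?pre p" using h by auto
  qed
  obtain q' where q': "q' \<in> ?pre ` F" "q' \<subseteq> ?pre p"
    using A[unfolded properly_zipped_def, rule_format, of "?pre p" "?pre ` F"] P1 P2 P3 by blast
  then obtain q where q: "q \<in> F" "?pre q \<subseteq> ?pre p" by blast
  have "q \<subseteq> p"
  proof
    fix s assume s: "s \<in> q"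
    have "q \<subseteq> carrier R" using h q(1) primeideal.axioms(1) ideal.axioms(1) additive_subgroup.a_subset by metis
    then have "s \<in> carrier R" using s by blast
    then have "(s, s) \<in> carrier (amalg_dup R I)" by (simp add: AD_carrier_iff a_minus_def r_neg I.zero_closed)
    then have "(s, s) \<in> ?pre q" using s by simp
    then show "s \<in> p" using q(2) by auto
  qed
  then show "\<exists>q\<in>F. q \<subseteq> p" using q(1) by blast
qed


lemma pz_up:
  assumes PR: "properly_zipped R"
  shows "properly_zipped (amalg_dup R I)"
  unfolding properly_zipped_def
proof (intro allI impI)
  fix Q F assume h: "primeideal Q (amalg_dup R I) \<and> (\<forall>q\<in>F. primeideal q (amalg_dup R I)) \<and> \<Inter>F \<subseteq> Q"
  define D where "D q = {s \<in> carrier R. (s, s) \<in> q}" for q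
  let ?A = "amalg_dup R I"
  define pre where "pre f J = {x \<in> carrier ?A. f x \<in> J}" for f :: "'a \<times> 'a \<Rightarrow> 'a" and J
  have DQ: "primeideal (D Q) R" "Q = pre fst (D Q) \<or> Q = pre snd (D Q)"
    using classify[of Q] h unfolding D_def pre_def by auto
  have Dq: "primeideal (D q) R" "q = pre fst (D q) \<or> q = pre snd (D q)" if "q \<in> F" for q
    using classify[of q] h that unfolding D_def pre_def by auto
  have Qsub: "Q \<subseteq> carrier ?A" using h primeideal.axioms(1) ideal.axioms(1) additive_subgroup.a_subset by metis
  have Fne: "F \<noteq> {}"
  proof
    assume "F = {}"
    then have "Q = carrier ?A" using h Qsub by auto
    then show False using h primeideal.I_notcarr by metis
  qed
  obtain f g :: "'a \<times> 'a \<Rightarrow> 'a" where fg: "(f = fst \<and> g = snd) \<or> (f = snd \<and> g = fst)" and Qf: "Q = pre f (D Q)"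
    using DQ(2) by blast
  have Fg: "q = pre f (D q) \<or> q = pre g (D q)" if "q \<in> F" for q using Dq(2)[OF that] fg by blast
  have Dsub: "D q \<subseteq> carrier R" for q unfolding D_def by blast
  interpret DQI: primeideal "D Q" R by (rule DQ(1))
  show "\<exists>q\<in>F. q \<subseteq> Q"
  proof (cases "I \<subseteq> D Q")
    case True
    have "\<Inter>(D ` F) \<subseteq> D Q"
    proof
      fix s assume s: "s \<in> \<Inter>(D ` F)"
      obtain q0 where "q0 \<in> F" using Fne by blast
      then have sc: "s \<in> carrier R" using s Dsub by blast
      have "(s, s) \<in> \<Inter>F" using s unfolding D_def by auto
      then show "s \<in> D Q" using h sc unfolding D_def by auto
    qed
    then obtain q' where q': "q' \<in> D ` F" "q' \<subseteq> D Q"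
      using PR[unfolded properly_zipped_def, rule_format, of "D Q" "D ` F"] DQ(1) Dq(1) by blast
    then obtain q where q: "q \<in> F" "D q \<subseteq> D Q" by blast
    have "q \<subseteq> Q"
    proof
      fix x assume x: "x \<in> q"
      obtain a b where ab: "x = (a, b)" by (cases x)
      have xc: "(a, b) \<in> carrier ?A" and ab': "a \<in> D q \<or> b \<in> D q"
      proof -
        have "x \<in> pre fst (D q) \<or> x \<in> pre snd (D q)" using Dq(2)[OF q(1)] x by metis
        then show "(a, b) \<in> carrier ?A" "a \<in> D q \<or> b \<in> D q" unfolding pre_def ab by auto
      qed
      have "a \<in> D Q \<and> b \<in> D Q"
        using both_in[OF DQI.is_ideal True xc] ab' q(2) by blast
      then have "x \<in> pre f (D Q)" using fg xc ab unfolding pre_def by auto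
      then show "x \<in> Q" by (simp only: Qf[symmetric])
    qed
    then show ?thesis using q(1) by blast
  next
    case False
    then obtain t where t: "t \<in> I" "t \<notin> D Q" by blast
    have tc: "t \<in> carrier R" using Iin t(1) .
    define F1 where "F1 = {q \<in> F. q = pre f (D q)}"
    have claim: "s \<in> D Q" if s: "s \<in> carrier R" "\<forall>q\<in>F1. s \<in> D q" for s
    proof -
      have stI: "s \<otimes> t \<in> I" using I.I_l_closed t(1) s(1) by blast
      obtain z where zc: "z \<in> carrier ?A" and fz: "f z = s \<otimes> t" and gz: "g z = \<zero>"
      proof (cases "f = fst \<and> g = snd")
        case True
        show ?thesis by (rule that[of "(s \<otimes> t, \<zero>)"]) (use c1[OF stI] True in auto)
      next
        case False
        then have "f = snd \<and> g = fst" using fg by blast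
        then show ?thesis by (intro that[of "(\<zero>, s \<otimes> t)"]) (use c2[OF stI] in auto)
      qed
      have "z \<in> q" if q: "q \<in> F" for q
      proof (cases "q \<in> F1")
        case True
        interpret Dqi: primeideal "D q" R by (rule Dq(1)[OF q])
        have "s \<otimes> t \<in> D q" using Dqi.I_r_closed s True tc by blast
        have qe: "q = pre f (D q)" using True unfolding F1_def by blast
        have "z \<in> pre f (D q)" using zc fz `s \<otimes> t \<in> D q` unfolding pre_def by simp
        then show ?thesis by (simp only: qe[symmetric])
      next
        case False
        interpret Dqi: primeideal "D q" R by (rule Dq(1)[OF q])
        have "q = pre g (D q)" using False Fg[OF q] q unfolding F1_def by blast
        moreover have "z \<in> pre g (D q)" using Dqi.zero_closed zc gz unfolding pre_def by simp
        ultimately show ?thesis by (simp only:)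
      qed
      then have "z \<in> Q" using h by blast
      then have "z \<in> pre f (D Q)" by (simp only: Qf[symmetric])
      then have "s \<otimes> t \<in> D Q" using fz unfolding pre_def by simp
      then show ?thesis using DQI.I_prime s(1) tc t(2) by blast
    qed
    have F1ne: "F1 \<noteq> {}"
    proof
      assume "F1 = {}"
      then have "\<one> \<in> D Q" using claim by simp
      then show False using prime_one[OF DQ(1)] by simp
    qed
    have "\<Inter>(D ` F1) \<subseteq> D Q"
    proof
      fix s assume s: "s \<in> \<Inter>(D ` F1)"
      obtain q0 where "q0 \<in> F1" using F1ne by blast
      then have sc: "s \<in> carrier R" using s Dsub by blast
      then show "s \<in> D Q" using claim s by blast
    qed
    then obtain q' where q': "q' \<in> D ` F1" "q' \<subseteq> D Q"
      using PR[unfolded properly_zipped_def, rule_format, of "D Q" "D ` F1"] DQ(1) Dq(1)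
      unfolding F1_def by blast
    then obtain q where q: "q \<in> F1" "D q \<subseteq> D Q" by blast
    have qe: "q = pre f (D q)" using q(1) unfolding F1_def by blast
    have "pre f (D q) \<subseteq> pre f (D Q)" using q(2) unfolding pre_def by blast
    then have "q \<subseteq> Q" by (simp only: qe[symmetric] Qf[symmetric])
    then show ?thesis using q(1) unfolding F1_def by blast
  qed
qed

end

theorem corollary4p8:
  fixes R :: "('a, 'b) ring_scheme" and I :: "'a set"
  assumes "cring R" and "ideal I R"
  shows "properly_zipped (amalg_dup R I) \<longleftrightarrow> properly_zipped R"
  using pz_up[OF assms] pz_down[OF assms] by blast

end
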